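(* Let $X$ be a real Banach space with $\operatorname{dens} X \geq \omega_2$. Suppose that $X$ has a fundamental biorthogonal system. Then $X$ does not contain overcomplete subsets.
   Context: A biorthogonal system in $X$ is a family $\{x_\alpha; f_\alpha\}_{\alpha\in\Gamma} \subseteq X \times X^*$ with $\langle f_\alpha, x_\beta\rangle = \delta_{\alpha,\beta}$ for all $\alpha,\beta\in\Gamma$; it is fundamental if $\overline{\operatorname{span}}\{x_\alpha\}_{\alpha\in\Gamma} = X$. $\operatorname{dens}$ denotes the density character. A subset $S$ of a Banach space $X$ with $|S| = \operatorname{dens} X$ is called overcomplete if every subset $\Lambda \subseteq S$ with $|\Lambda| = |S|$ is linearly dense in $X$. *)

theory Defs
  imports "HOL-Analysis.Analysis"
begin

text \<open>Cardinal comparisons use the ordinal-relation machinery of HOL/BNF_Cardinal_Order_Relation: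
  card_of A is the cardinal of A, ordLeq / ordIso are cardinal \<open>\<le>\<close> / \<open>=\<close>,
  natLeq is omega, and cardSuc is the cardinal successor.\<close>

definition aleph2 :: "nat set set rel" where
  "aleph2 = cardSuc (cardSuc natLeq)"

definition dens_ge_omega2 :: "'a::real_normed_vector itself \<Rightarrow> bool" where
  "dens_ge_omega2 _ \<longleftrightarrow> (\<forall>D::'a set. closure D = UNIV \<longrightarrow> ordLeq3 aleph2 (card_of D))"

definition card_eq_dens :: "'a::real_normed_vector set \<Rightarrow> bool" where
  "card_eq_dens S \<longleftrightarrow>
     (\<exists>D::'a set. closure D = UNIV \<and> ordIso2 (card_of D) (card_of S)) \<and>
     (\<forall>D::'a set. closure D = UNIV \<longrightarrow> ordLeq3 (card_of S) (card_of D))"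

definition biorthogonal_system ::
    "'i set \<Rightarrow> ('i \<Rightarrow> 'a::real_normed_vector) \<Rightarrow> ('i \<Rightarrow> 'a \<Rightarrow> real) \<Rightarrow> bool" where
  "biorthogonal_system \<Gamma> x f \<longleftrightarrow>
     (\<forall>\<alpha>\<in>\<Gamma>. bounded_linear (f \<alpha>)) \<and>
     (\<forall>\<alpha>\<in>\<Gamma>. \<forall>\<beta>\<in>\<Gamma>. f \<alpha> (x \<beta>) = (if \<alpha> = \<beta> then 1 else 0))"

definition fundamental_biorthogonal_system ::
    "'i set \<Rightarrow> ('i \<Rightarrow> 'a::real_normed_vector) \<Rightarrow> ('i \<Rightarrow> 'a \<Rightarrow> real) \<Rightarrow> bool" where
  "fundamental_biorthogonal_system \<Gamma> x f \<longleftrightarrow>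
     biorthogonal_system \<Gamma> x f \<and> closure (span (x ` \<Gamma>)) = UNIV"

definition overcomplete :: "'a::real_normed_vector set \<Rightarrow> bool" where
  "overcomplete S \<longleftrightarrow> card_eq_dens S \<and>
     (\<forall>\<Lambda>\<subseteq>S. ordIso2 (card_of \<Lambda>) (card_of S) \<longrightarrow> closure (span \<Lambda>) = UNIV)"

end

theory Submission
  imports Defs
begin
unbundle cardinal_syntax

lemma countable_iff_natLeq: "countable A \<longleftrightarrow> |A| \<le>o natLeq"
proof
  assume "countable A"
  then obtain f :: "_ \<Rightarrow> nat" where "inj_on f A" unfolding countable_def by blast
  then have "|A| \<le>o |UNIV::nat set|" using card_of_ordLeq[of A "UNIV::nat set"] by blast
  then show "|A| \<le>o natLeq" using card_of_nat ordLeq_ordIso_trans by blast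
next
  assume "|A| \<le>o natLeq"
  then have "|A| \<le>o |UNIV::nat set|" using card_of_nat ordLeq_ordIso_trans ordIso_symmetric by blast
  then obtain f :: "_ \<Rightarrow> nat" where "inj_on f A" using card_of_ordLeq[of A "UNIV::nat set"] by blast
  then show "countable A" unfolding countable_def by blast
qed

lemma w1_Card: "Card_order (cardSuc natLeq)"
  by (simp add: cardSuc_Card_order natLeq_Card_order)

lemma w1_WO: "Well_order (cardSuc natLeq)"
  using w1_Card card_order_on_well_order_on by blast

lemma w1_infinite: "\<not> finite (Field (cardSuc natLeq))"
  using Cinfinite_cardSuc[OF natLeq_Cinfinite] by (simp add: cinfinite_def)

lemma w1_Field: "|Field (cardSuc natLeq)| =o cardSuc natLeq"
  using card_of_Field_ordIso w1_Card by blast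

lemma uncountable_w1: "\<not> countable A \<Longrightarrow> cardSuc natLeq \<le>o |A|"
proof -
  assume "\<not> countable A"
  then have "\<not> |A| \<le>o natLeq" using countable_iff_natLeq by blast
  then have "natLeq <o |A|" using not_ordLeq_iff_ordLess card_of_Well_order natLeq_Well_order by blast
  then show ?thesis using cardSuc_ordLess_ordLeq natLeq_Card_order card_of_Card_order by blast
qed

lemma w1_uncountable: "cardSuc natLeq \<le>o |A| \<Longrightarrow> \<not> countable A"
proof
  assume a: "cardSuc natLeq \<le>o |A|" "countable A"
  then have "|A| \<le>o natLeq" using countable_iff_natLeq by blast
  then have "cardSuc natLeq \<le>o natLeq" using a ordLeq_transitive by blast
  moreover have "natLeq <o cardSuc natLeq" using cardSuc_greater natLeq_Card_order by blast
  ultimately show False using not_ordLess_ordLeq by blast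
qed

lemma comb:
  fixes W :: "'a rel" and \<rho> :: "'i \<Rightarrow> 'a"
  assumes WO: "Well_order W" and sub: "\<rho> ` A \<subseteq> Field W"
  and cnt: "\<forall>b\<in>Field W. countable {\<alpha>\<in>A. (\<rho> \<alpha>, b) \<in> W}"
  shows "|A| \<le>o cardSuc natLeq"
proof -
  define V where "V = Restr W (\<rho> ` A)"
  have WV: "Well_order V" unfolding V_def using WO by (rule Well_order_Restr)
  have refl: "\<And>a. a \<in> Field W \<Longrightarrow> (a,a) \<in> W"
    using WO unfolding well_order_on_def linear_order_on_def partial_order_on_def preorder_on_def refl_on_def
    by blast
  have FV: "Field V = \<rho> ` A"
  proof
    show "Field V \<subseteq> \<rho> ` A" unfolding V_def by (rule Field_Restr_subset)
    show "\<rho> ` A \<subseteq> Field V"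
    proof
      fix b assume b: "b \<in> \<rho> ` A"
      then have "b \<in> Field W" using sub by blast
      then have "(b,b) \<in> W" by (rule refl)
      then have "(b,b) \<in> V" unfolding V_def using b by simp
      then show "b \<in> Field V" by (rule FieldI1)
    qed
  qed
  have "V \<le>o cardSuc natLeq"
  proof (rule ccontr)
    assume "\<not> V \<le>o cardSuc natLeq"
    then have "cardSuc natLeq <o V" using not_ordLeq_iff_ordLess WV w1_WO by blast
    then obtain a where a: "a \<in> Field V" and iso: "cardSuc natLeq =o Restr V (underS V a)"
      using ordLess_iff_ordIso_Restr WV w1_WO by blast
    have "|Field (cardSuc natLeq)| \<le>o |Field (Restr V (underS V a))|"
      using card_of_mono2[OF ordIso_iff_ordLeq[THEN iffD1, OF iso, THEN conjunct1]] .
    moreover have "Field (Restr V (underS V a)) \<subseteq> \<rho> ` {\<alpha>\<in>A. (\<rho> \<alpha>, a) \<in> W}"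
      using Field_Restr_subset[of V "underS V a"] unfolding underS_def V_def by blast
    moreover have "countable (\<rho> ` {\<alpha>\<in>A. (\<rho> \<alpha>, a) \<in> W})"
      using cnt a FV sub by blast
    ultimately have "countable (Field (cardSuc natLeq))"
      by (meson card_of_mono1 countable_iff_natLeq ordLeq_transitive)
    then show False using w1_uncountable[OF ordIso_iff_ordLeq[THEN iffD1, OF ordIso_symmetric[OF w1_Field], THEN conjunct1]] by blast
  qed
  then have img: "|\<rho> ` A| \<le>o |Field (cardSuc natLeq)|"
  proof -
    have "|\<rho> ` A| \<le>o V" using card_of_least[of "\<rho> ` A" V] WV FV by simp
    also note \<open>V \<le>o cardSuc natLeq\<close>
    also note ordIso_iff_ordLeq[THEN iffD1, OF ordIso_symmetric[OF w1_Field], THEN conjunct1]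
    finally show ?thesis .
  qed
  have fib: "\<forall>b\<in>\<rho> ` A. |{\<alpha>\<in>A. \<rho> \<alpha> = b}| \<le>o |Field (cardSuc natLeq)|"
  proof
    fix b assume b: "b \<in> \<rho> ` A"
    have "{\<alpha>\<in>A. \<rho> \<alpha> = b} \<subseteq> {\<alpha>\<in>A. (\<rho> \<alpha>, b) \<in> W}" using refl sub by blast
    moreover have "countable {\<alpha>\<in>A. (\<rho> \<alpha>, b) \<in> W}" using cnt b sub by blast
    ultimately have "|{\<alpha>\<in>A. \<rho> \<alpha> = b}| \<le>o natLeq"
      using countable_iff_natLeq countable_subset by blast
    moreover have "natLeq \<le>o |Field (cardSuc natLeq)|"
      using w1_infinite infinite_iff_natLeq_ordLeq by blast
    ultimately show "|{\<alpha>\<in>A. \<rho> \<alpha> = b}| \<le>o |Field (cardSuc natLeq)|" using ordLeq_transitive by blast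
  qed
  have "A = (\<Union>b\<in>\<rho> ` A. {\<alpha>\<in>A. \<rho> \<alpha> = b})" by blast
  then have "|A| \<le>o |Field (cardSuc natLeq)|"
    using card_of_UNION_ordLeq_infinite[OF w1_infinite img fib] by simp
  then show ?thesis using w1_Field ordLeq_ordIso_trans by blast
qed


lemma bio_inj:
  assumes "biorthogonal_system \<Gamma> x f"
  shows "inj_on x \<Gamma>"
proof (rule inj_onI)
  fix a b assume ab: "a \<in> \<Gamma>" "b \<in> \<Gamma>" "x a = x b"
  have 1: "f a (x a) = 1" using assms ab(1) unfolding biorthogonal_system_def by simp
  have 2: "a \<noteq> b \<Longrightarrow> f a (x b) = 0" using assms ab(1,2) unfolding biorthogonal_system_def by simp
  show "a = b" using 1 2 ab(3) by fastforce
qed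

lemma span_finite_supp:
  assumes bio: "biorthogonal_system \<Gamma> x f" and y: "y \<in> span (x ` \<Gamma>)"
  shows "finite {\<alpha>\<in>\<Gamma>. f \<alpha> y \<noteq> 0}"
  using y
proof (induct rule: span_induct_alt)
  case base
  have "\<forall>\<alpha>\<in>\<Gamma>. f \<alpha> 0 = 0" using bio unfolding biorthogonal_system_def
    using linear_simps(3) bounded_linear.linear by blast
  then have "{\<alpha>\<in>\<Gamma>. f \<alpha> 0 \<noteq> 0} = {}" by blast
  then show ?case by (metis finite.emptyI)
next
  case (step c v y)
  then obtain \<beta> where \<beta>: "\<beta> \<in> \<Gamma>" "v = x \<beta>" by blast
  have "{\<alpha>\<in>\<Gamma>. f \<alpha> (c *\<^sub>R v + y) \<noteq> 0} \<subseteq> {\<beta>} \<union> {\<alpha>\<in>\<Gamma>. f \<alpha> y \<noteq> 0}"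
  proof
    fix \<alpha> assume a: "\<alpha> \<in> {\<alpha>\<in>\<Gamma>. f \<alpha> (c *\<^sub>R v + y) \<noteq> 0}"
    then have lin: "linear (f \<alpha>)" using bio unfolding biorthogonal_system_def
      using bounded_linear.linear by blast
    have "f \<alpha> (c *\<^sub>R v + y) = c * f \<alpha> v + f \<alpha> y"
      using lin by (simp add: linear_add linear_scale)
    show "\<alpha> \<in> {\<beta>} \<union> {\<alpha>\<in>\<Gamma>. f \<alpha> y \<noteq> 0}"
    proof (cases "\<alpha> = \<beta>")
      case False
      then have "f \<alpha> v = 0" using a \<beta> bio unfolding biorthogonal_system_def by simp
      then show ?thesis using a \<open>f \<alpha> (c *\<^sub>R v + y) = c * f \<alpha> v + f \<alpha> y\<close> by simp
    qed simp
  qed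
  then show ?case using step finite_subset by blast
qed

lemma supp_countable:
  assumes fb: "fundamental_biorthogonal_system \<Gamma> x f"
  shows "countable {\<alpha>\<in>\<Gamma>. f \<alpha> s \<noteq> 0}"
proof -
  have bio: "biorthogonal_system \<Gamma> x f" using fb unfolding fundamental_biorthogonal_system_def by blast
  have "s \<in> closure (span (x ` \<Gamma>))" using fb unfolding fundamental_biorthogonal_system_def by blast
  then obtain y where y: "\<And>n. y n \<in> span (x ` \<Gamma>)" and lim: "y \<longlonglongrightarrow> s"
    unfolding closure_sequential by blast
  have "{\<alpha>\<in>\<Gamma>. f \<alpha> s \<noteq> 0} \<subseteq> (\<Union>n. {\<alpha>\<in>\<Gamma>. f \<alpha> (y n) \<noteq> 0})"
  proof
    fix \<alpha> assume a: "\<alpha> \<in> {\<alpha>\<in>\<Gamma>. f \<alpha> s \<noteq> 0}"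
    show "\<alpha> \<in> (\<Union>n. {\<alpha>\<in>\<Gamma>. f \<alpha> (y n) \<noteq> 0})"
    proof (rule ccontr)
      assume "\<alpha> \<notin> (\<Union>n. {\<alpha>\<in>\<Gamma>. f \<alpha> (y n) \<noteq> 0})"
      then have z: "\<And>n. f \<alpha> (y n) = 0" using a by blast
      have bl: "bounded_linear (f \<alpha>)" using bio a unfolding biorthogonal_system_def by blast
      have "(\<lambda>n. f \<alpha> (y n)) \<longlonglongrightarrow> f \<alpha> s" using bounded_linear.tendsto[OF bl lim] .
      then have "(\<lambda>n. 0::real) \<longlonglongrightarrow> f \<alpha> s" using z by simp
      then have "f \<alpha> s = 0" using LIMSEQ_unique tendsto_const by blast
      then show False using a by simp
    qed
  qed
  moreover have "countable (\<Union>n. {\<alpha>\<in>\<Gamma>. f \<alpha> (y n) \<noteq> 0})"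
    using span_finite_supp[OF bio y] by (simp add: countable_finite)
  ultimately show ?thesis using countable_subset by blast
qed

lemma ker_not_dense:
  assumes bio: "biorthogonal_system \<Gamma> x f" and a: "\<alpha> \<in> \<Gamma>"
    and L: "\<Lambda> \<subseteq> {s. f \<alpha> s = 0}"
  shows "closure (span \<Lambda>) \<noteq> UNIV"
proof -
  have bl: "bounded_linear (f \<alpha>)" using bio a unfolding biorthogonal_system_def by blast
  have sub: "subspace {s. f \<alpha> s = 0}"
    using bounded_linear.linear[OF bl] unfolding subspace_def
    by (simp add: linear_add linear_scale linear_0)
  have cl: "closed {s. f \<alpha> s = 0}"
    using bl by (intro closed_Collect_eq continuous_intros) (simp_all add: linear_continuous_on)
  have "span \<Lambda> \<subseteq> {s. f \<alpha> s = 0}" using span_minimal[OF L sub] .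
  then have "closure (span \<Lambda>) \<subseteq> {s. f \<alpha> s = 0}" using closure_minimal cl by blast
  moreover have "f \<alpha> (x \<alpha>) = 1" using bio a unfolding biorthogonal_system_def by simp
  ultimately have "x \<alpha> \<notin> closure (span \<Lambda>)" by auto
  then show ?thesis by auto
qed


primrec qsp :: "'i set \<Rightarrow> ('i \<Rightarrow> 'a::real_vector) \<Rightarrow> nat \<Rightarrow> 'a set" where
  "qsp G x 0 = {0}"
| "qsp G x (Suc n) = (\<lambda>(p,\<beta>,q). p + of_rat q *\<^sub>R x \<beta>) ` (qsp G x n \<times> G \<times> (UNIV::rat set))"

lemma qsp_add: "a \<in> qsp G x n \<Longrightarrow> b \<in> qsp G x m \<Longrightarrow> a + b \<in> qsp G x (n + m)"
proof (induct m arbitrary: b)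
  case 0
  then show ?case by simp
next
  case (Suc m)
  then obtain p \<beta> q where b: "b = p + of_rat q *\<^sub>R x \<beta>" "p \<in> qsp G x m" "\<beta> \<in> G" by auto
  then have "a + p \<in> qsp G x (n + m)" using Suc by blast
  then have "(a + p) + of_rat q *\<^sub>R x \<beta> \<in> qsp G x (Suc (n + m))"
    using b(3) by (auto intro!: image_eqI[where x="(a+p, \<beta>, q)"])
  then show ?case using b(1) by (simp add: add.assoc)
qed

lemma qsp_scale: "a \<in> qsp G x n \<Longrightarrow> of_rat r *\<^sub>R a \<in> qsp G x n"
proof (induct n arbitrary: a)
  case 0
  then show ?case by simp
next
  case (Suc n)
  then obtain p \<beta> q where a: "a = p + of_rat q *\<^sub>R x \<beta>" "p \<in> qsp G x n" "\<beta> \<in> G" by auto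
  then have "of_rat r *\<^sub>R p \<in> qsp G x n" using Suc by blast
  then have "of_rat r *\<^sub>R p + of_rat (r * q) *\<^sub>R x \<beta> \<in> qsp G x (Suc n)"
    using a(3) by (auto intro!: image_eqI[where x="(of_rat r *\<^sub>R p, \<beta>, r * q)"])
  then show ?case using a(1) by (simp add: scaleR_add_right of_rat_mult)
qed

lemma qsp_card:
  assumes G: "|G| \<le>o cardSuc natLeq"
  shows "|qsp G x n| \<le>o cardSuc natLeq"
proof (induct n)
  case 0
  have "finite (qsp G x 0)" by simp
  then have "|qsp G x 0| \<le>o natLeq" using countable_iff_natLeq countable_finite by blast
  then show ?case using cardSuc_greater[OF natLeq_Card_order] ordLeq_ordLess_trans ordLess_imp_ordLeq by blast
next
  case (Suc n)
  have Q: "|UNIV::rat set| \<le>o cardSuc natLeq"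
    using countable_iff_natLeq[of "UNIV::rat set"] cardSuc_greater[OF natLeq_Card_order]
      ordLeq_ordLess_trans ordLess_imp_ordLeq by blast
  have "|G \<times> (UNIV::rat set)| \<le>o cardSuc natLeq"
    using card_of_Times_ordLeq_infinite_Field[OF w1_infinite G Q w1_Card] .
  then have "|qsp G x n \<times> G \<times> (UNIV::rat set)| \<le>o cardSuc natLeq"
    using card_of_Times_ordLeq_infinite_Field[OF w1_infinite Suc _ w1_Card] by blast
  moreover have "|qsp G x (Suc n)| \<le>o |qsp G x n \<times> G \<times> (UNIV::rat set)|"
    unfolding qsp.simps by (rule card_of_image)
  ultimately show ?case using ordLeq_transitive by blast
qed

lemma small_dense:
  fixes x :: "'i \<Rightarrow> 'a::real_normed_vector"
  assumes fb: "fundamental_biorthogonal_system \<Gamma> x f" and G: "|\<Gamma>| \<le>o cardSuc natLeq"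
  shows "\<exists>D::'a set. closure D = UNIV \<and> |D| \<le>o cardSuc natLeq"
proof -
  define D where "D = (\<Union>n. qsp \<Gamma> x n)"
  have U: "|UNIV::nat set| \<le>o |Field (cardSuc natLeq)|"
  proof -
    have "natLeq \<le>o |Field (cardSuc natLeq)|" using w1_infinite infinite_iff_natLeq_ordLeq by blast
    then show ?thesis by (rule ordIso_ordLeq_trans[OF card_of_nat])
  qed
  have Q: "\<forall>n\<in>UNIV. |qsp \<Gamma> x n| \<le>o |Field (cardSuc natLeq)|"
    by (intro ballI ordLeq_ordIso_trans[OF qsp_card[OF G] ordIso_symmetric[OF w1_Field]])
  have "|D| \<le>o |Field (cardSuc natLeq)|"
    unfolding D_def by (rule card_of_UNION_ordLeq_infinite[OF w1_infinite U Q])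
  then have card: "|D| \<le>o cardSuc natLeq" by (rule ordLeq_ordIso_trans[OF _ w1_Field])
  have addD: "a + b \<in> D" if ab: "a \<in> D" "b \<in> D" for a b
  proof -
    obtain n m where "a \<in> qsp \<Gamma> x n" "b \<in> qsp \<Gamma> x m" using ab unfolding D_def by blast
    then have "a + b \<in> qsp \<Gamma> x (n + m)" by (rule qsp_add)
    then show ?thesis unfolding D_def by blast
  qed
  have scD: "of_rat r *\<^sub>R a \<in> D" if a: "a \<in> D" for a r
  proof -
    obtain n where "a \<in> qsp \<Gamma> x n" using a unfolding D_def by blast
    then have "of_rat r *\<^sub>R a \<in> qsp \<Gamma> x n" by (rule qsp_scale)
    then show ?thesis unfolding D_def by blast
  qed
  have subsp: "subspace (closure D)"
    unfolding subspace_def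
  proof (intro conjI ballI allI)
    have "0 \<in> D" unfolding D_def using qsp.simps(1) by blast
    then show "0 \<in> closure D" using closure_subset by blast
  next
    fix a b assume a: "a \<in> closure D" and b: "b \<in> closure D"
    obtain u where u: "\<And>n. u n \<in> D" "u \<longlonglongrightarrow> a" using a unfolding closure_sequential by blast
    obtain v where v: "\<And>n. v n \<in> D" "v \<longlonglongrightarrow> b" using b unfolding closure_sequential by blast
    have "(\<lambda>n. u n + v n) \<longlonglongrightarrow> a + b" using u(2) v(2) by (rule tendsto_add)
    moreover have "\<forall>n. u n + v n \<in> D" using u(1) v(1) addD by blast
    ultimately show "a + b \<in> closure D" unfolding closure_sequential
      by (intro exI[where x="\<lambda>n. u n + v n"]) simp
  next
    fix c :: real and a assume a: "a \<in> closure D"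
    obtain u where u: "\<And>n. u n \<in> D" "u \<longlonglongrightarrow> a" using a unfolding closure_sequential by blast
    have "c \<in> closure \<rat>" using Rats_closure_real by simp
    then obtain r where r: "\<And>n. r n \<in> \<rat>" "r \<longlonglongrightarrow> c" unfolding closure_sequential by blast
    have "\<forall>n. \<exists>q. r n = of_rat q" using r(1) Rats_cases by metis
    then obtain q where q: "\<And>n. r n = of_rat (q n)" by metis
    have "(\<lambda>n. r n *\<^sub>R u n) \<longlonglongrightarrow> c *\<^sub>R a" using r(2) u(2) by (rule tendsto_scaleR)
    moreover have "\<forall>n. r n *\<^sub>R u n \<in> D" using u(1) scD q by metis
    ultimately show "c *\<^sub>R a \<in> closure D" unfolding closure_sequential
      by (intro exI[where x="\<lambda>n. r n *\<^sub>R u n"]) simp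
  qed
  have "x ` \<Gamma> \<subseteq> D"
  proof
    fix v assume "v \<in> x ` \<Gamma>"
    then obtain \<beta> where \<beta>: "\<beta> \<in> \<Gamma>" "v = x \<beta>" by blast
    have "(\<lambda>(p,\<beta>,q). p + of_rat q *\<^sub>R x \<beta>) (0, \<beta>, 1::rat) \<in> qsp \<Gamma> x (Suc 0)"
      using \<beta>(1) by (simp only: qsp.simps) (rule imageI, simp)
    then have "v \<in> qsp \<Gamma> x (Suc 0)" using \<beta>(2) by simp
    then show "v \<in> D" unfolding D_def by blast
  qed
  then have "x ` \<Gamma> \<subseteq> closure D" using closure_subset by blast
  then have "span (x ` \<Gamma>) \<subseteq> closure D" using span_minimal subsp by blast
  then have "closure (span (x ` \<Gamma>)) \<subseteq> closure D" using closure_minimal closed_closure by blast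
  then have "closure D = UNIV" using fb unfolding fundamental_biorthogonal_system_def by blast
  then show ?thesis using card by blast
qed


theorem theorem3p6:
  fixes \<Gamma> :: "'i set" and x :: "'i \<Rightarrow> 'a::banach" and f :: "'i \<Rightarrow> 'a \<Rightarrow> real"
  assumes "dens_ge_omega2 TYPE('a)"
    and "fundamental_biorthogonal_system \<Gamma> x f"
  shows "\<not> (\<exists>S::'a set. overcomplete S)"
proof
  note dens = assms(1) and fb = assms(2)
  assume "\<exists>S::'a set. overcomplete S"
  then obtain S :: "'a set" where ov: "overcomplete S" by blast
  have bio: "biorthogonal_system \<Gamma> x f" using fb unfolding fundamental_biorthogonal_system_def by blast
  have ced: "card_eq_dens S" using ov unfolding overcomplete_def by blast
  have ovL: "\<And>\<Lambda>. \<Lambda> \<subseteq> S \<Longrightarrow> |\<Lambda>| =o |S| \<Longrightarrow> closure (span \<Lambda>) = UNIV"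
    using ov unfolding overcomplete_def by blast
  obtain D0 :: "'a set" where D0: "closure D0 = UNIV" "|D0| =o |S|"
    using ced unfolding card_eq_dens_def by blast
  have "aleph2 \<le>o |D0|" using dens D0(1) unfolding dens_ge_omega2_def by blast
  then have a2S: "aleph2 \<le>o |S|" by (rule ordLeq_ordIso_trans[OF _ D0(2)])
  have w1a2: "cardSuc natLeq <o aleph2" unfolding aleph2_def by (rule cardSuc_greater[OF w1_Card])
  have w1S: "cardSuc natLeq <o |S|" by (rule ordLess_ordLeq_trans[OF w1a2 a2S])
  have infS: "\<not> finite S"
  proof -
    have "natLeq <o |S|" by (rule ordLess_transitive[OF cardSuc_greater[OF natLeq_Card_order] w1S])
    then have "natLeq \<le>o |S|" by (rule ordLess_imp_ordLeq)
    then show ?thesis using infinite_iff_natLeq_ordLeq by blast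
  qed
  have notG: "\<not> |\<Gamma>| \<le>o cardSuc natLeq"
  proof
    assume "|\<Gamma>| \<le>o cardSuc natLeq"
    then obtain D :: "'a set" where D: "closure D = UNIV" "|D| \<le>o cardSuc natLeq"
      using small_dense[OF fb] by blast
    have "aleph2 \<le>o |D|" using dens D(1) unfolding dens_ge_omega2_def by blast
    then have "cardSuc natLeq <o |D|" by (rule ordLess_ordLeq_trans[OF w1a2])
    from not_ordLess_ordLeq[OF this] D(2) show False by (rule notE)
  qed
  define B where "B \<alpha> = {s\<in>S. f \<alpha> s = 0}" for \<alpha>
  have Bless: "|B \<alpha>| <o |S|" if a: "\<alpha> \<in> \<Gamma>" for \<alpha>
  proof -
    have sub: "B \<alpha> \<subseteq> S" unfolding B_def by blast
    have "\<not> |B \<alpha>| =o |S|"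
    proof
      assume "|B \<alpha>| =o |S|"
      then have "closure (span (B \<alpha>)) = UNIV" by (rule ovL[OF sub])
      moreover have "closure (span (B \<alpha>)) \<noteq> UNIV"
        by (rule ker_not_dense[OF bio a]) (auto simp: B_def)
      ultimately show False by simp
    qed
    moreover have le: "|B \<alpha>| \<le>o |S|" using card_of_mono1[OF sub] .
    ultimately show ?thesis using ordLeq_iff_ordLess_or_ordIso[THEN iffD1, OF le] by (elim disjE) simp_all
  qed
  have rho_ex: "\<exists>a. a \<in> S \<and> |B \<alpha>| \<le>o |underS |S| a|" if a: "\<alpha>\<in>\<Gamma>" for \<alpha>
  proof -
    obtain a where a1: "a \<in> Field |S|" and iso: "|B \<alpha>| =o Restr |S| (underS |S| a)"
      using ordLess_iff_ordIso_Restr[OF card_of_Well_order card_of_Well_order, THEN iffD1, OF Bless[OF a]] by (elim bexE)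
    have "|Field |B \<alpha>|| \<le>o |Field (Restr |S| (underS |S| a))|"
      using card_of_mono2[OF ordIso_iff_ordLeq[THEN iffD1, OF iso, THEN conjunct1]] .
    then have "|B \<alpha>| \<le>o |Field (Restr |S| (underS |S| a))|" by (simp only: Field_card_of)
    moreover have "|Field (Restr |S| (underS |S| a))| \<le>o |underS |S| a|"
      by (rule card_of_mono1[OF Field_Restr_subset])
    ultimately have "|B \<alpha>| \<le>o |underS |S| a|" by (rule ordLeq_transitive)
    moreover have "a \<in> S" using a1 by (simp only: Field_card_of)
    ultimately show ?thesis by blast
  qed
  have "\<forall>\<alpha>\<in>\<Gamma>. \<exists>a. a \<in> S \<and> |B \<alpha>| \<le>o |underS |S| a|" using rho_ex by blast
  then obtain \<rho> where rho: "\<forall>\<alpha>\<in>\<Gamma>. \<rho> \<alpha> \<in> S \<and> |B \<alpha>| \<le>o |underS |S| (\<rho> \<alpha>)|"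
    using bchoice[of \<Gamma> "\<lambda>\<alpha> a. a \<in> S \<and> |B \<alpha>| \<le>o |underS |S| a|"] by blast
  have sub: "\<rho> ` \<Gamma> \<subseteq> Field |S|" using rho by (auto simp: Field_card_of)
  have "\<not> (\<forall>b\<in>Field |S|. countable {\<alpha>\<in>\<Gamma>. (\<rho> \<alpha>, b) \<in> |S|})"
    using notG comb[OF card_of_Well_order sub] by (rule contrapos_nn)
  then obtain b where b: "b \<in> S" and unc: "\<not> countable {\<alpha>\<in>\<Gamma>. (\<rho> \<alpha>, b) \<in> |S|}"
    by (auto simp: Field_card_of)
  define A' where "A' = {\<alpha>\<in>\<Gamma>. (\<rho> \<alpha>, b) \<in> |S|}"
  have "cardSuc natLeq \<le>o |A'|" unfolding A'_def by (rule uncountable_w1[OF unc])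
  then have FA: "|Field (cardSuc natLeq)| \<le>o |A'|" by (rule ordIso_ordLeq_trans[OF w1_Field])
  obtain A'' where A'': "A'' \<subseteq> A'" "|Field (cardSuc natLeq)| =o |A''|"
    using internalize_card_of_ordLeq2[of "Field (cardSuc natLeq)" A', THEN iffD1, OF FA] by blast
  have A''w1: "|A''| =o cardSuc natLeq"
    by (rule ordIso_transitive[OF ordIso_symmetric[OF A''(2)] w1_Field])
  have A''unc: "\<not> countable A''"
    by (rule w1_uncountable[OF ordIso_iff_ordLeq[THEN iffD1, OF ordIso_symmetric[OF A''w1], THEN conjunct1]])
  have A''S: "|A''| <o |S|" by (rule ordIso_ordLess_trans[OF A''w1 w1S])
  have US: "|underS |S| b| <o |S|"
    using card_of_underS[OF card_of_Card_order, of b S] b by (simp add: Field_card_of)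
  have trW: "trans |S|" and antiW: "antisym |S|"
    using card_of_Well_order[of S]
    unfolding well_order_on_def linear_order_on_def partial_order_on_def preorder_on_def by blast+
  have BU: "\<forall>\<alpha>\<in>A''. |B \<alpha>| \<le>o |underS |S| b|"
  proof
    fix \<alpha> assume "\<alpha> \<in> A''"
    then have aG: "\<alpha>\<in>\<Gamma>" and le: "(\<rho> \<alpha>, b) \<in> |S|" using A''(1) unfolding A'_def by auto
    have "underS |S| (\<rho> \<alpha>) \<subseteq> underS |S| b" by (rule underS_incr[OF trW antiW le])
    then have "|underS |S| (\<rho> \<alpha>)| \<le>o |underS |S| b|" by (rule card_of_mono1)
    moreover have "|B \<alpha>| \<le>o |underS |S| (\<rho> \<alpha>)|" using rho aG by simp
    ultimately show "|B \<alpha>| \<le>o |underS |S| b|" by (rule ordLeq_transitive[rotated])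
  qed
  have infA: "\<not> finite A''" using A''unc countable_finite by blast
  then have infP: "\<not> finite (A'' <+> underS |S| b)" by simp
  have BU2: "\<forall>\<alpha>\<in>A''. |B \<alpha>| \<le>o |A'' <+> underS |S| b|"
  proof
    fix \<alpha> assume "\<alpha> \<in> A''"
    then have "|B \<alpha>| \<le>o |underS |S| b|" using BU by simp
    then show "|B \<alpha>| \<le>o |A'' <+> underS |S| b|" by (rule ordLeq_transitive[OF _ card_of_Plus2])
  qed
  have "|\<Union>\<alpha>\<in>A''. B \<alpha>| \<le>o |A'' <+> underS |S| b|"
    by (rule card_of_UNION_ordLeq_infinite[OF infP card_of_Plus1 BU2])
  moreover have "|A'' <+> underS |S| b| <o |S|"
    by (rule card_of_Plus_ordLess_infinite[OF infS A''S US])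
  ultimately have UL: "|\<Union>\<alpha>\<in>A''. B \<alpha>| <o |S|" by (rule ordLeq_ordLess_trans)
  have "\<not> S \<subseteq> (\<Union>\<alpha>\<in>A''. B \<alpha>)"
  proof
    assume "S \<subseteq> (\<Union>\<alpha>\<in>A''. B \<alpha>)"
    then have "|S| \<le>o |\<Union>\<alpha>\<in>A''. B \<alpha>|" by (rule card_of_mono1)
    from not_ordLess_ordLeq[OF UL] this show False by (rule notE)
  qed
  then obtain s where s: "s \<in> S" "s \<notin> (\<Union>\<alpha>\<in>A''. B \<alpha>)" by blast
  have "A'' \<subseteq> {\<alpha>\<in>\<Gamma>. f \<alpha> s \<noteq> 0}" using s A''(1) unfolding A'_def B_def by auto
  moreover have "countable {\<alpha>\<in>\<Gamma>. f \<alpha> s \<noteq> 0}" by (rule supp_countable[OF fb])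
  ultimately have "countable A''" by (rule countable_subset)
  then show False using A''unc by (rule notE[rotated])
qed

end
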